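(* Let $x$ be an irrational real number and $f_x(t):=f(x+i/t)$ for $t>0$. If $t_0>0$ is a point where $f_x$ has a local minimum, then there exist $g\in\mathrm{PSL}_2(\mathbb{Z})$ with $x+i/t_0\in g\cdot(D_0+n)$ for some $n\in\mathbb{Z}$, and, writing $g\cdot\infty=p/q$ in lowest terms with $q>0$, one has $t_0=\left|q/(qx-p)\right|$ and $f_x(t_0)=2\,|q(qx-p)|$.
   Context: $\mathbb{H}=\{\omega\in\mathbb{C}:\mathrm{Im}(\omega)>0\}$. For $\omega\in\mathbb{H}$, $d(\omega)=\min\{|\alpha+\beta\omega| : \alpha,\beta\in\mathbb{Z},\ (\alpha,\beta)\neq(0,0)\}$ and $f(\omega)=d(\omega)^2/\mathrm{Im}(\omega)$. $\mathrm{PSL}_2(\mathbb{Z})$ acts by $\begin{pmatrix}a&b\\c&d\end{pmatrix}\cdot\omega=\frac{a\omega+b}{c\omega+d}$, with $g\cdot\infty=a/c$ if $c\neq0$ and $\infty$ otherwise. $D_0=\{\omega: -1/2\le\mathrm{Re}(\omega)\le1/2,\ |\omega|\ge1\}$; the sets $g\cdot(D_0+n)$, $g\in\mathrm{PSL}_2(\mathbb{Z})$, $n\in\mathbb{Z}$, cover $\mathbb{H}$, and on such a set with cusp $g\cdot\infty=p/q$ one has $f(x+i/t)=(qx-p)^2t+q^2/t$. *)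

theory Defs
  imports "HOL-Analysis.Analysis"
begin

definition lattice_min :: "complex \<Rightarrow> real" where
  "lattice_min w = Inf {cmod (of_int a + of_int b * w) | a b :: int. (a, b) \<noteq> (0, 0)}"

definition fH :: "complex \<Rightarrow> real" where
  "fH w = (lattice_min w)\<^sup>2 / Im w"

text \<open>Elements of PSL_2(Z) are represented by integer matrices (a,b,c,d) with ad - bc = 1
  (a matrix and its negative act identically).\<close>
definition SL2Z :: "(int \<times> int \<times> int \<times> int) set" where
  "SL2Z = {(a, b, c, d). a * d - b * c = 1}"

fun moebius :: "int \<times> int \<times> int \<times> int \<Rightarrow> complex \<Rightarrow> complex" where
  "moebius (a, b, c, d) w = (of_int a * w + of_int b) / (of_int c * w + of_int d)"

definition D0 :: "complex set" where
  "D0 = {w. 0 < Im w \<and> -1/2 \<le> Re w \<and> Re w \<le> 1/2 \<and> cmod w \<ge> 1}"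

definition translate_tile :: "int \<times> int \<times> int \<times> int \<Rightarrow> int \<Rightarrow> complex set" where
  "translate_tile g n = moebius g ` ((\<lambda>z. z + of_int n) ` D0)"

end

theory Submission imports Defs begin

lemma val_pos:
  assumes "Im w > 0" "(a, b) \<noteq> (0::int, 0::int)"
  shows "cmod (of_int a + of_int b * w) > 0"
proof (rule ccontr)
  assume "\<not> ?thesis"
  hence z: "of_int a + of_int b * w = 0" by simp
  hence "Im (of_int a + of_int b * w) = 0" by simp
  hence "of_int b * Im w = 0" by simp
  hence "b = 0" using assms(1) by simp
  with z have "a = 0" by simp
  with \<open>b = 0\<close> assms(2) show False by simp
qed

lemma lattice_attain:
  assumes y: "Im w > 0"
  shows "\<exists>\<alpha> \<beta>. (\<alpha>, \<beta>) \<noteq> (0::int, 0::int) \<and> lattice_min w = cmod (of_int \<alpha> + of_int \<beta> * w) \<and>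
     (\<forall>a b. (a, b) \<noteq> (0::int, 0::int) \<longrightarrow> cmod (of_int \<alpha> + of_int \<beta> * w) \<le> cmod (of_int a + of_int b * w))"
proof -
  define v where "v = (\<lambda>(a::int, b::int). cmod (of_int a + of_int b * w))"
  define N :: int where "N = ceiling (1 + 1 / Im w + \<bar>Re w\<bar> / Im w)"
  define F where "F = {p \<in> {-N..N} \<times> {-N..N}. p \<noteq> (0, 0) \<and> v p \<le> 1}"
  have finF: "finite F" unfolding F_def by (rule finite_subset[of _ "{-N..N} \<times> {-N..N}"]) auto
  have bnd: "(a, b) \<in> F" if "(a, b) \<noteq> (0, 0)" "v (a, b) \<le> 1" for a b
  proof -
    have c: "cmod (of_int a + of_int b * w) \<le> 1" using that by (simp add: v_def)
    have "\<bar>Im (of_int a + of_int b * w)\<bar> \<le> 1" using abs_Im_le_cmod c order_trans by blast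
    hence hb: "\<bar>of_int b\<bar> * Im w \<le> 1" using y by (simp add: abs_mult)
    hence hb': "\<bar>of_int b\<bar> \<le> 1 / Im w" using y by (simp add: field_simps)
    have "\<bar>Re (of_int a + of_int b * w)\<bar> \<le> 1" using abs_Re_le_cmod c order_trans by blast
    hence "\<bar>of_int a + of_int b * Re w\<bar> \<le> 1" by simp
    moreover have "\<bar>real_of_int a\<bar> \<le> \<bar>of_int a + of_int b * Re w\<bar> + \<bar>of_int b * Re w\<bar>" by linarith
    ultimately have "\<bar>real_of_int a\<bar> \<le> 1 + \<bar>of_int b\<bar> * \<bar>Re w\<bar>" by (simp add: abs_mult)
    also have "\<bar>of_int b\<bar> * \<bar>Re w\<bar> \<le> 1 / Im w * \<bar>Re w\<bar>" using hb' by (intro mult_right_mono) auto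
    finally have ha: "\<bar>real_of_int a\<bar> \<le> 1 + \<bar>Re w\<bar> / Im w" by simp
    have "1 / Im w \<ge> 0" "\<bar>Re w\<bar> / Im w \<ge> 0" using y by auto
    hence "\<bar>real_of_int a\<bar> \<le> real_of_int N" "\<bar>real_of_int b\<bar> \<le> real_of_int N"
      unfolding N_def using ha hb' by (smt (verit) le_of_int_ceiling)+
    hence "\<bar>a\<bar> \<le> N" "\<bar>b\<bar> \<le> N" by linarith+
    thus ?thesis using that unfolding F_def by auto
  qed
  have "(1, 0) \<in> F" by (rule bnd) (auto simp: v_def)
  hence ne: "v ` F \<noteq> {}" by auto
  have "Min (v ` F) \<in> v ` F" using finF ne by (intro Min_in) auto
  then obtain m where mF: "m \<in> F" and mmin: "v m = Min (v ` F)" by auto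
  have le: "v m \<le> v p" if "p \<noteq> (0, 0)" for p
  proof (cases "v p \<le> 1")
    case True
    then have "p \<in> F" using bnd that by (cases p) auto
    thus ?thesis using mmin finF by simp
  next
    case False
    have "v m \<le> 1" using mF unfolding F_def by auto
    thus ?thesis using False by simp
  qed
  obtain \<alpha> \<beta> where m: "m = (\<alpha>, \<beta>)" by (cases m)
  have m0: "(\<alpha>, \<beta>) \<noteq> (0, 0)" using mF m unfolding F_def by auto
  have "lattice_min w = v m"
    unfolding lattice_min_def
  proof (rule cInf_eq_minimum)
    show "v m \<in> {cmod (of_int a + of_int b * w) |a b. (a, b) \<noteq> (0, 0)}"
      using m m0 by (auto simp: v_def)
    fix z assume "z \<in> {cmod (of_int a + of_int b * w) |a b. (a, b) \<noteq> (0, 0)}"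
    then obtain a b where "z = v (a, b)" "(a, b) \<noteq> (0, 0)" by (auto simp: v_def)
    thus "v m \<le> z" using le by auto
  qed
  moreover have "\<forall>a b. (a, b) \<noteq> (0::int, 0::int) \<longrightarrow> cmod (of_int \<alpha> + of_int \<beta> * w) \<le> cmod (of_int a + of_int b * w)"
    using le m by (auto simp: v_def)
  ultimately show ?thesis using m m0 by (intro exI[of _ \<alpha>] exI[of _ \<beta>]) (auto simp: v_def)
qed

lemma min_coprime:
  assumes y: "Im w > 0" and nz: "(\<alpha>, \<beta>) \<noteq> (0::int, 0::int)"
    and mn: "\<forall>a b. (a, b) \<noteq> (0::int, 0::int) \<longrightarrow> cmod (of_int \<alpha> + of_int \<beta> * w) \<le> cmod (of_int a + of_int b * w)"
  shows "coprime \<alpha> \<beta>"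
proof -
  define g where "g = gcd \<alpha> \<beta>"
  have gpos: "g > 0" using nz unfolding g_def by auto
  obtain a' where a': "\<alpha> = g * a'" unfolding g_def by (meson gcd_dvd1 dvdE)
  obtain b' where b': "\<beta> = g * b'" unfolding g_def by (meson gcd_dvd2 dvdE)
  have nz': "(a', b') \<noteq> (0, 0)" using nz a' b' by auto
  have eq: "of_int \<alpha> + of_int \<beta> * w = of_int g * (of_int a' + of_int b' * w)"
    using a' b' by (simp add: algebra_simps)
  have "cmod (of_int \<alpha> + of_int \<beta> * w) = of_int g * cmod (of_int a' + of_int b' * w)"
    unfolding eq norm_mult using gpos by simp
  moreover have "cmod (of_int \<alpha> + of_int \<beta> * w) \<le> cmod (of_int a' + of_int b' * w)" using mn nz' by blast
  moreover have "cmod (of_int a' + of_int b' * w) > 0" using val_pos[OF y nz'] .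
  ultimately have "real_of_int g \<le> 1"
    by (metis mult_le_cancel_right_pos mult_1)
  hence "g = 1" using gpos by linarith
  thus ?thesis unfolding g_def by (simp add: coprime_iff_gcd_eq_1)
qed

lemma convex_locmin:
  fixes A B t0 \<epsilon> :: real
  assumes A: "A > 0" and B: "B \<ge> 0" and t0: "t0 > 0" and e: "\<epsilon> > 0"
    and lm: "\<forall>t. t > 0 \<and> \<bar>t - t0\<bar> < \<epsilon> \<longrightarrow> A * t0 + B / t0 \<le> A * t + B / t"
  shows "A * t0^2 = B"
proof (rule ccontr)
  have key: "A * t + B / t - (A * t0 + B / t0) = (t - t0) * (A - B / (t * t0))" if "t > 0" for t
    using that t0 by (simp add: field_simps)
  assume ne: "A * t0^2 \<noteq> B"
  show False
  proof (cases "A * t0^2 > B")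
    case True
    define r where "r = B/(A*t0)"
    define t where "t = max (t0 - \<epsilon>/2) (max (t0/2) ((r + t0)/2))"
    have "r < t0" using True A t0 unfolding r_def by (simp add: field_simps power2_eq_square)
    hence tlt: "t < t0" and tpos: "t > 0" and "t > B/(A*t0)" and "\<bar>t - t0\<bar> < \<epsilon>"
      using e t0 unfolding r_def[symmetric] t_def by (auto simp: max_def min_def)
    hence "A * t * t0 > B" using A t0 by (simp add: field_simps)
    hence "A - B / (t * t0) > 0" using tpos t0 by (simp add: field_simps)
    hence "(t - t0) * (A - B / (t * t0)) < 0" using tlt by (simp add: mult_neg_pos)
    thus False using key[OF tpos] lm \<open>\<bar>t - t0\<bar> < \<epsilon>\<close> tpos by fastforce
  next
    case False
    hence lt: "A * t0^2 < B" using ne by simp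
    define r where "r = B/(A*t0)"
    define t where "t = min (t0 + \<epsilon>/2) ((r + t0)/2)"
    have "r > t0" using lt A t0 unfolding r_def by (simp add: field_simps power2_eq_square)
    hence tgt: "t > t0" and tpos: "t > 0" and "t < B/(A*t0)" and "\<bar>t - t0\<bar> < \<epsilon>"
      using e t0 unfolding r_def[symmetric] t_def by (auto simp: max_def min_def)
    hence "A * t * t0 < B" using A t0 by (simp add: field_simps)
    hence "A - B / (t * t0) < 0" using tpos t0 by (simp add: field_simps)
    hence "(t - t0) * (A - B / (t * t0)) < 0" using tgt by (simp add: mult_pos_neg)
    thus False using key[OF tpos] lm \<open>\<bar>t - t0\<bar> < \<epsilon>\<close> tpos by fastforce
  qed
qed

lemma cmod_sq:
  "(cmod (of_int a + of_int b * Complex x y))^2 = (real_of_int a + real_of_int b * x)^2 + (real_of_int b * y)^2"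
  by (simp add: cmod_power2)

lemma lattice_min_le:
  assumes "(a, b) \<noteq> (0::int, 0::int)"
  shows "lattice_min w \<le> cmod (of_int a + of_int b * w)"
  unfolding lattice_min_def
  by (rule cInf_lower) (use assms in \<open>auto intro!: bdd_belowI[of _ 0]\<close>)

theorem proposition4:
  fixes x t0 :: real
  assumes irr: "x \<notin> \<rat>"
    and t0pos: "t0 > 0"
    and locmin: "\<exists>\<epsilon>>0. \<forall>t. t > 0 \<and> \<bar>t - t0\<bar> < \<epsilon> \<longrightarrow>
                   fH (Complex x (1 / t0)) \<le> fH (Complex x (1 / t))"
  shows "\<exists>a b c d n. (a, b, c, d) \<in> SL2Z \<and>
           Complex x (1 / t0) \<in> translate_tile (a, b, c, d) n \<and>
           c \<noteq> 0 \<and>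
           (\<forall>p q :: int. coprime p q \<and> q > 0 \<and> real_of_int p / real_of_int q = real_of_int a / real_of_int c \<longrightarrow>
              t0 = \<bar>real_of_int q / (real_of_int q * x - real_of_int p)\<bar> \<and>
              fH (Complex x (1 / t0)) = 2 * \<bar>real_of_int q * (real_of_int q * x - real_of_int p)\<bar>)"
proof -
  define \<omega> where "\<omega> = Complex x (1 / t0)"
  have yw: "Im \<omega> > 0" using t0pos by (simp add: \<omega>_def)
  obtain \<alpha> \<beta> where nz: "(\<alpha>, \<beta>) \<noteq> (0::int, 0::int)"
    and lmeq: "lattice_min \<omega> = cmod (of_int \<alpha> + of_int \<beta> * \<omega>)"
    and mn: "\<forall>a b. (a, b) \<noteq> (0::int, 0::int) \<longrightarrow> cmod (of_int \<alpha> + of_int \<beta> * \<omega>) \<le> cmod (of_int a + of_int b * \<omega>)"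
    using lattice_attain[OF yw] by blast
  have cop: "coprime \<alpha> \<beta>" using min_coprime[OF yw nz mn] .
  define A where "A = (real_of_int \<alpha> + real_of_int \<beta> * x)^2"
  define B where "B = (real_of_int \<beta>)^2"
  have lin_nz: "real_of_int \<alpha> + real_of_int \<beta> * x \<noteq> 0"
  proof
    assume h: "real_of_int \<alpha> + real_of_int \<beta> * x = 0"
    show False
    proof (cases "\<beta> = 0")
      case True thus False using h nz by simp
    next
      case False
      hence "x = - real_of_int \<alpha> / real_of_int \<beta>" using h by (simp add: field_simps)
      hence "x \<in> \<rat>" by simp
      thus False using irr by simp
    qed
  qed
  have Apos: "A > 0" using lin_nz unfolding A_def by simp
  have Bnn: "B \<ge> 0" unfolding B_def by simp
  have hval: "(cmod (of_int \<alpha> + of_int \<beta> * Complex x (1/t)))^2 / (1/t) = A * t + B / t" if "t > 0" for t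
    using that unfolding cmod_sq A_def B_def by (simp add: field_simps power2_eq_square)
  have fle: "fH (Complex x (1/t)) \<le> A * t + B / t" if "t > 0" for t
  proof -
    have "Im (Complex x (1/t)) > 0" using that by simp
    then obtain a' b' where "(a', b') \<noteq> (0::int, 0::int)" and e: "lattice_min (Complex x (1/t)) = cmod (of_int a' + of_int b' * Complex x (1/t))"
      using lattice_attain by blast
    have ge0: "lattice_min (Complex x (1/t)) \<ge> 0" using e by simp
    have "lattice_min (Complex x (1/t)) \<le> cmod (of_int \<alpha> + of_int \<beta> * Complex x (1/t))"
      using lattice_min_le[OF nz] .
    hence "(lattice_min (Complex x (1/t)))^2 \<le> (cmod (of_int \<alpha> + of_int \<beta> * Complex x (1/t)))^2"
      using ge0 by (intro power_mono) auto
    hence "(lattice_min (Complex x (1/t)))^2 / (1/t) \<le> (cmod (of_int \<alpha> + of_int \<beta> * Complex x (1/t)))^2 / (1/t)"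
      using that by (intro divide_right_mono) auto
    thus ?thesis unfolding fH_def using hval[OF that] by simp
  qed
  have feq: "fH \<omega> = A * t0 + B / t0"
    unfolding fH_def lmeq using hval[OF t0pos] by (simp add: \<omega>_def)
  obtain \<epsilon> where e: "\<epsilon> > 0" and lm: "\<forall>t. t > 0 \<and> \<bar>t - t0\<bar> < \<epsilon> \<longrightarrow> fH \<omega> \<le> fH (Complex x (1 / t))"
    using locmin unfolding \<omega>_def by blast
  have "\<forall>t. t > 0 \<and> \<bar>t - t0\<bar> < \<epsilon> \<longrightarrow> A * t0 + B / t0 \<le> A * t + B / t"
  proof (intro allI impI)
    fix t assume h: "t > 0 \<and> \<bar>t - t0\<bar> < \<epsilon>"
    have "fH \<omega> \<le> fH (Complex x (1 / t))" using lm h by blast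
    also have "\<dots> \<le> A * t + B / t" using fle h by blast
    finally show "A * t0 + B / t0 \<le> A * t + B / t" using feq by simp
  qed
  hence ABeq: "A * t0^2 = B" using convex_locmin[OF Apos Bnn t0pos e] by blast
  have bnz: "\<beta> \<noteq> 0"
  proof
    assume "\<beta> = 0"
    hence "B = 0" unfolding B_def by simp
    thus False using ABeq Apos t0pos by simp
  qed
  have t0eq: "t0 = \<bar>real_of_int \<beta>\<bar> / \<bar>real_of_int \<alpha> + real_of_int \<beta> * x\<bar>"
  proof -
    have "(t0 * \<bar>real_of_int \<alpha> + real_of_int \<beta> * x\<bar>)^2 = A * t0^2"
      unfolding A_def by (simp add: power_mult_distrib algebra_simps)
    also have "\<dots> = (\<bar>real_of_int \<beta>\<bar>)^2" using ABeq unfolding B_def by simp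
    finally have "(t0 * \<bar>real_of_int \<alpha> + real_of_int \<beta> * x\<bar>)^2 = (\<bar>real_of_int \<beta>\<bar>)^2" .
    hence "t0 * \<bar>real_of_int \<alpha> + real_of_int \<beta> * x\<bar> = \<bar>real_of_int \<beta>\<bar>"
      by (rule power2_eq_imp_eq) (use t0pos in auto)
    thus ?thesis using lin_nz by (simp add: field_simps)
  qed
  have fval: "fH \<omega> = 2 * \<bar>real_of_int \<beta>\<bar> * \<bar>real_of_int \<alpha> + real_of_int \<beta> * x\<bar>"
  proof -
    have "B / t0 = A * t0" using ABeq[symmetric] t0pos by (simp add: power2_eq_square)
    hence "fH \<omega> = 2 * A * t0" using feq by simp
    also have "\<dots> = 2 * \<bar>real_of_int \<beta>\<bar> * \<bar>real_of_int \<alpha> + real_of_int \<beta> * x\<bar>"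
      unfolding t0eq A_def using lin_nz by (simp add: field_simps power2_eq_square abs_mult_self_eq)
    finally show ?thesis .
  qed
  define a where "a = - \<alpha>"
  define c where "c = \<beta>"
  have copac: "coprime a c" using cop unfolding a_def c_def by simp
  obtain u v where uv: "u * a + v * c = 1" using bezout_int[of a c] copac
    by (auto simp: coprime_iff_gcd_eq_1)
  define d where "d = u"
  define b where "b = - v"
  have det: "a * d - b * c = 1" using uv unfolding d_def b_def by (simp add: algebra_simps)
  have detc: "of_int a * of_int d - of_int b * of_int c = (1::complex)"
    using arg_cong[OF det, of "of_int :: int \<Rightarrow> complex"] by simp
  define D where "D = of_int a - of_int c * \<omega>"
  have Deq: "D = - (of_int \<alpha> + of_int \<beta> * \<omega>)" unfolding D_def a_def c_def by simp
  have cmD: "cmod D = cmod (of_int \<alpha> + of_int \<beta> * \<omega>)" unfolding Deq by (simp only: norm_minus_cancel)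
  have Dnz: "D \<noteq> 0" using val_pos[OF yw nz] cmD by auto
  define w where "w = (of_int d * \<omega> - of_int b) / D"
  have mw: "moebius (a, b, c, d) w = \<omega>"
  proof -
    have n1: "of_int a * w + of_int b = \<omega> / D"
      using Dnz detc unfolding w_def D_def by (simp add: field_simps)
    have n2: "of_int c * w + of_int d = 1 / D"
      using Dnz detc unfolding w_def D_def by (simp add: field_simps)
    show ?thesis using n1 n2 Dnz by simp
  qed
  have Imw: "Im w > 0"
  proof -
    have "Im w = Im \<omega> * (real_of_int a * real_of_int d - real_of_int b * real_of_int c) / (cmod D)^2"
      unfolding w_def D_def Im_divide' by (simp add: algebra_simps)
    also have "\<dots> = Im \<omega> / (cmod D)^2" using det by (simp add: of_int_mult[symmetric] del: of_int_mult)
    finally show ?thesis using yw Dnz by simp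
  qed
  define n where "n = floor (Re w + 1/2)"
  define z where "z = w - of_int n"
  have zD0: "z \<in> D0"
  proof -
    have "Im z > 0" using Imw by (simp add: z_def)
    moreover have "-1/2 \<le> Re z" "Re z \<le> 1/2" unfolding z_def n_def
      using floor_le_iff[of "Re w + 1/2"] le_floor_iff[of _ "Re w + 1/2"] by (simp_all, linarith+)
    moreover have "cmod z \<ge> 1"
    proof -
      have zeq: "z = (of_int (- (b + n * a)) + of_int (d + n * c) * \<omega>) / D"
        unfolding z_def w_def using Dnz unfolding D_def by (simp add: field_simps)
      have nz2: "(- (b + n * a), d + n * c) \<noteq> (0, 0)"
      proof
        assume "(- (b + n * a), d + n * c) = (0, 0)"
        hence "b = - n * a" "d = - n * c" by auto
        thus False using det by (simp add: algebra_simps)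
      qed
      have "cmod D \<le> cmod (of_int (- (b + n * a)) + of_int (d + n * c) * \<omega>)"
        using mn nz2 cmD by metis
      thus ?thesis unfolding zeq norm_divide using Dnz by simp
    qed
    ultimately show ?thesis unfolding D0_def by simp
  qed
  have tile: "\<omega> \<in> translate_tile (a, b, c, d) n"
    unfolding translate_tile_def using zD0 mw by (auto simp: z_def intro!: image_eqI)
  have cnz: "c \<noteq> 0" using bnz c_def by simp
  have final: "t0 = \<bar>real_of_int q / (real_of_int q * x - real_of_int p)\<bar> \<and>
              fH \<omega> = 2 * \<bar>real_of_int q * (real_of_int q * x - real_of_int p)\<bar>"
    if pq: "coprime p q" "q > 0" "real_of_int p / real_of_int q = real_of_int a / real_of_int c" for p q :: int
  proof -
    have cross: "p * c = a * q" using pq(2,3) cnz by (simp add: field_simps flip: of_int_mult) 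
    have "c dvd a * q" using cross by (metis dvd_triv_right)
    hence "c dvd q" using copac by (metis coprime_commute coprime_dvd_mult_right_iff)
    moreover have "q dvd p * c" using cross by (metis dvd_triv_right mult.commute)
    hence "q dvd c" using pq(1) by (metis coprime_commute coprime_dvd_mult_right_iff)
    ultimately have qc: "\<bar>q\<bar> = \<bar>c\<bar>" using zdvd_antisym_abs by blast
    define s where "s = real_of_int q / real_of_int c"
    have s2: "s * s = 1" unfolding s_def using qc cnz
      by (simp add: field_simps) (metis abs_mult_self_eq of_int_abs of_int_mult)
    have qs: "real_of_int q = s * real_of_int c" unfolding s_def using cnz by simp
    have snz: "s \<noteq> 0" using s2 by auto
    have ps: "real_of_int p = s * real_of_int a" using pq(3) qs snz cnz by (simp add: field_simps)
    have e1: "real_of_int q * x - real_of_int p = s * (real_of_int c * x - real_of_int a)"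
      using qs ps by (simp add: algebra_simps)
    have ac: "real_of_int c * x - real_of_int a = real_of_int \<alpha> + real_of_int \<beta> * x"
      unfolding a_def c_def by simp
    have sabs: "\<bar>s\<bar> = 1" using s2 by (metis abs_mult_self_eq abs_one abs_power2 power2_eq_square real_sqrt_abs real_sqrt_one)
    have q1: "real_of_int q / (real_of_int q * x - real_of_int p) = (s * real_of_int \<beta>) / (s * (real_of_int \<alpha> + real_of_int \<beta> * x))"
      by (subst e1, subst ac, subst qs, simp add: c_def)
    have q2: "real_of_int q * (real_of_int q * x - real_of_int p) = (s * real_of_int \<beta>) * (s * (real_of_int \<alpha> + real_of_int \<beta> * x))"
      by (subst e1, subst ac, subst qs, simp add: c_def)
    show ?thesis
      unfolding q1 q2 using t0eq fval sabs lin_nz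
      by (simp add: abs_mult abs_divide)
  qed
  show ?thesis
    using det tile cnz final unfolding SL2Z_def \<omega>_def by blast
qed

end
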